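(* Let $\alpha\in(0,1)$. For every $t\ge0$ and every $k\in\mathbb{Z}^+$, $$e^{-t(\delta_0-A_\alpha)}(k)=\int_0^\infty P_s(k)\,d\mu_t^{[\alpha]}(s),$$ i.e. $e^{-t(\delta_0-A_\alpha)}=\int_0^\infty d\mu_t^{[\alpha]}(s)\,P_s$ as elements of $\mathbb{P}(\mathbb{Z}^+)$.
   Context: $A_\alpha\in\mathbb{P}(\mathbb{Z}^+)$ is given by $A_\alpha(0)=0$, $A_\alpha(k)=\alpha(1-\alpha)(2-\alpha)\cdots((k-1)-\alpha)/k!$ for $k\in\mathbb{N}$. Exponentials are taken in the convolution Banach algebra $L^1(\mathbb{Z})$ with unit $\delta_0$ (point mass at $0$): $e^{-t(\delta_0-F)}=e^{-t}\sum_{n\ge0}t^nF^{(n)}/n!$. $P_s=e^{-s}\sum_{k\ge0}s^k\delta_k/k!$ is the Poisson probability. $(\mu_t^{[\alpha]})_{t\ge0}$ is the convolution semigroup of Lévy stable probability measures of order $\alpha$ on $[0,\infty)$, characterized by $\int_0^\infty e^{-sz}d\mu_t^{[\alpha]}(s)=e^{-tz^{\alpha}}$ for all $z\in\mathbb{C}$ with $\mathrm{Re}\,z\ge0$ (principal branch of $z^\alpha$). *)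

theory Defs
  imports "HOL-Probability.Probability"
begin

text \<open>Probability on Z^+ represented as functions nat => real (values at k >= 0).\<close>

definition A_alpha :: "real \<Rightarrow> nat \<Rightarrow> real" where
  "A_alpha \<alpha> k = (if k = 0 then 0
     else \<alpha> * (\<Prod>j\<in>{1..<k}. (real j - \<alpha>)) / fact k)"

definition conv :: "(nat \<Rightarrow> real) \<Rightarrow> (nat \<Rightarrow> real) \<Rightarrow> nat \<Rightarrow> real" where
  "conv f g k = (\<Sum>i\<le>k. f i * g (k - i))"

definition delta0 :: "nat \<Rightarrow> real" where
  "delta0 k = (if k = 0 then 1 else 0)"

fun conv_pow :: "(nat \<Rightarrow> real) \<Rightarrow> nat \<Rightarrow> nat \<Rightarrow> real" where
  "conv_pow F 0 = delta0"
| "conv_pow F (Suc n) = conv F (conv_pow F n)"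

text \<open>e^{-t(delta_0 - F)} = e^{-t} sum_n t^n F^(n) / n!, evaluated at k.\<close>
definition exp_semigroup :: "real \<Rightarrow> (nat \<Rightarrow> real) \<Rightarrow> nat \<Rightarrow> real" where
  "exp_semigroup t F k = exp (- t) * (\<Sum>n. t ^ n * conv_pow F n k / fact n)"

definition poisson :: "real \<Rightarrow> nat \<Rightarrow> real" where
  "poisson s k = exp (- s) * s ^ k / fact k"

definition is_stable_measure :: "real \<Rightarrow> real \<Rightarrow> real measure \<Rightarrow> bool" where
  "is_stable_measure \<alpha> t \<mu> \<longleftrightarrow>
     sets \<mu> = sets borel \<and> prob_space \<mu> \<and> emeasure \<mu> {..<0} = 0 \<and>
     (\<forall>z::complex. Re z \<ge> 0 \<longrightarrow>
        (LINT s|\<mu>. exp (- (complex_of_real s * z))) = exp (- (complex_of_real t * z powr complex_of_real \<alpha>)))"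

end

theory Submission
  imports Defs
begin


lemma conv_pow_zero_below:
  assumes "F 0 = 0"
  shows "k < n \<Longrightarrow> conv_pow F n k = 0"
proof (induction n arbitrary: k)
  case 0 then show ?case by simp
next
  case (Suc n)
  have "\<And>i. i \<le> k \<Longrightarrow> F i * conv_pow F n (k - i) = 0"
  proof -
    fix i assume "i \<le> k"
    show "F i * conv_pow F n (k - i) = 0"
    proof (cases "i = 0")
      case True then show ?thesis using assms by simp
    next
      case False then have "k - i < n" using Suc.prems \<open>i \<le> k\<close> by linarith
      then show ?thesis using Suc.IH by simp
    qed
  qed
  then show ?case by (simp only: conv_pow.simps conv_def) (intro sum.neutral, blast)
qed

lemma A_alpha_0: "A_alpha a 0 = 0" by (simp add: A_alpha_def)

lemma A_alpha_nonneg: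
  assumes "0 < a" "a < 1" shows "0 \<le> A_alpha a k"
  unfolding A_alpha_def using assms
  by (auto intro!: divide_nonneg_pos mult_nonneg_nonneg prod_nonneg)

lemma conv_pow_nonneg:
  assumes "\<And>k. 0 \<le> F k" shows "0 \<le> conv_pow F n k"
  using assms
  by (induction n arbitrary: k) (auto simp: delta0_def conv_def intro!: sum_nonneg mult_nonneg_nonneg)

lemma exp_semigroup_finite:
  assumes "F 0 = 0"
  shows "exp_semigroup t F k = exp (- t) * (\<Sum>n\<le>k. t ^ n * conv_pow F n k / fact n)"
proof -
  have "(\<Sum>n. t ^ n * conv_pow F n k / fact n) = (\<Sum>n\<le>k. t ^ n * conv_pow F n k / fact n)"
    by (rule suminf_finite) (auto simp: conv_pow_zero_below[where F=F, OF assms])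
  then show ?thesis by (simp add: exp_semigroup_def)
qed

lemma A_alpha_gchoose:
  "A_alpha a k * w ^ k = (if k = 0 then 1 else 0) - (a gchoose k) * (- w) ^ k"
proof (cases k)
  case 0 then show ?thesis by (simp add: A_alpha_def)
next
  case (Suc m)
  have p: "pochhammer (- a) k = (- a) * (\<Prod>j\<in>{1..<k}. (real j - a))"
    unfolding pochhammer_prod using Suc
    by (simp add: prod.atLeast_Suc_lessThan[of 0] atLeast0LessThan[symmetric])
  have m1: "((- 1::real) ^ k) * ((- 1) ^ k) = 1"
    by (simp flip: power_mult_distrib)
  have "(a gchoose k) * (- w) ^ k = ((- 1) ^ k * (- 1) ^ k) * (pochhammer (- a) k * w ^ k / fact k)"
    unfolding gbinomial_pochhammer power_minus[of w k] by (simp only: mult_ac times_divide_eq_left times_divide_eq_right)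
  also have "\<dots> = pochhammer (- a) k * w ^ k / fact k" by (simp only: m1 mult_1)
  finally have g: "(a gchoose k) * (- w) ^ k = pochhammer (- a) k * w ^ k / fact k" .
  have "A_alpha a k * w ^ k = a * (\<Prod>j\<in>{1..<k}. (real j - a)) * w ^ k / fact k"
    using Suc by (simp add: A_alpha_def)
  also have "\<dots> = - (pochhammer (- a) k * w ^ k / fact k)" by (simp add: p)
  finally show ?thesis using Suc g by simp
qed

lemma gen_A:
  assumes "0 \<le> w" "w < 1"
  shows "(\<lambda>k. A_alpha a k * w ^ k) sums (1 - (1 - w) powr a)"
proof -
  have g: "(\<lambda>k. (a gchoose k) * (- w) ^ k) sums (1 + - w) powr a"
    by (rule gen_binomial_real) (use assms in simp)
  have s: "(\<lambda>k. if k = 0 then 1 else (0::real)) sums 1"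
    using sums_single[of 0 "\<lambda>_. 1::real"] by simp
  show ?thesis using sums_diff[OF s g] by (simp add: A_alpha_gchoose)
qed

lemma ennreal_sums:
  fixes f :: "nat \<Rightarrow> real"
  assumes "\<And>i. 0 \<le> f i" "0 \<le> x" "(\<Sum>i. ennreal (f i)) = ennreal x"
  shows "f sums x"
proof -
  have sm: "summable f" using assms by (intro summable_suminf_not_top) auto
  have "ennreal (suminf f) = ennreal x" using suminf_ennreal2[OF assms(1) sm] assms(3) by simp
  then have "suminf f = x" using assms(2) suminf_nonneg[OF sm assms(1)] by simp
  then show ?thesis using sm by (auto simp: summable_sums_iff)
qed

lemma gen_conv_pow:
  fixes F :: "nat \<Rightarrow> real"
  assumes nn: "\<And>k. 0 \<le> F k" and w: "0 \<le> w" and G: "(\<lambda>k. F k * w ^ k) sums G"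
  shows "(\<lambda>k. conv_pow F n k * w ^ k) sums (G ^ n)"
proof (induction n)
  case 0
  have "(\<lambda>k. conv_pow F 0 k * w ^ k) = (\<lambda>k. if k = 0 then 1 else 0)"
    by (auto simp: delta0_def)
  then show ?case using sums_single[of 0 "\<lambda>_. 1::real"] by simp
next
  case (Suc n)
  have a: "summable (\<lambda>k. norm (F k * w ^ k))"
    using G nn w by (simp add: sums_summable abs_mult)
  have b: "summable (\<lambda>k. norm (conv_pow F n k * w ^ k))"
    using Suc.IH conv_pow_nonneg[OF nn] w by (simp add: sums_summable abs_mult)
  have "(\<lambda>k. \<Sum>i\<le>k. (F i * w ^ i) * (conv_pow F n (k - i) * w ^ (k - i))) sums
     ((\<Sum>k. F k * w ^ k) * (\<Sum>k. conv_pow F n k * w ^ k))"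
    by (rule Cauchy_product_sums[OF a b])
  moreover have "\<And>k. (\<Sum>i\<le>k. (F i * w ^ i) * (conv_pow F n (k - i) * w ^ (k - i))) = conv_pow F (Suc n) k * w ^ k"
  proof -
    fix k
    have "(\<Sum>i\<le>k. (F i * w ^ i) * (conv_pow F n (k - i) * w ^ (k - i))) = (\<Sum>i\<le>k. (F i * conv_pow F n (k - i)) * w ^ k)"
    proof (intro sum.cong refl)
      fix i assume "i \<in> {..k}"
      then have "w ^ i * w ^ (k - i) = w ^ k" by (simp add: power_add[symmetric])
      then show "(F i * w ^ i) * (conv_pow F n (k - i) * w ^ (k - i)) = (F i * conv_pow F n (k - i)) * w ^ k"
        by (metis mult.assoc mult.left_commute)
    qed
    then show "(\<Sum>i\<le>k. (F i * w ^ i) * (conv_pow F n (k - i) * w ^ (k - i))) = conv_pow F (Suc n) k * w ^ k"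
      by (simp add: conv_def sum_distrib_right)
  qed
  ultimately show ?case using sums_unique[OF G] sums_unique[OF Suc.IH] by simp
qed

lemma ennreal_suminf_swap:
  fixes f :: "nat \<Rightarrow> nat \<Rightarrow> ennreal"
  shows "(\<Sum>k. \<Sum>n. f n k) = (\<Sum>n. \<Sum>k. f n k)"
proof -
  have "(\<Sum>k. \<Sum>n. f n k) = (\<integral>\<^sup>+k. (\<Sum>n. f n k) \<partial>count_space UNIV)"
    by (simp add: nn_integral_count_space_nat)
  also have "\<dots> = (\<Sum>n. \<integral>\<^sup>+k. f n k \<partial>count_space UNIV)"
    by (rule nn_integral_suminf) simp
  also have "\<dots> = (\<Sum>n. \<Sum>k. f n k)"
    by (simp add: nn_integral_count_space_nat)
  finally show ?thesis .
qed

lemma real_exp_series: "(\<lambda>n. (x::real) ^ n / fact n) sums exp x"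
  using exp_converges[of x] by (simp add: divide_inverse mult.commute scaleR_conv_of_real)

lemma gen_semigroup:
  assumes a: "0 < a" "a < 1" and t: "0 \<le> t" and w: "0 \<le> w" "w < 1"
  shows "(\<lambda>k. exp_semigroup t (A_alpha a) k * w ^ k) sums exp (- t * (1 - w) powr a)"
proof -
  define G where "G = 1 - (1 - w) powr a"
  have G0: "0 \<le> G" unfolding G_def using a w powr_mono2[of a "1 - w" 1] by simp
  have Anng: "\<And>k. 0 \<le> A_alpha a k" using A_alpha_nonneg a by blast
  define c where "c n k = t ^ n * conv_pow (A_alpha a) n k / fact n * w ^ k" for n k
  have cnn: "0 \<le> c n k" for n k unfolding c_def
    using conv_pow_nonneg[OF Anng] t w by simp
  define b where "b k = (\<Sum>n\<le>k. c n k)" for k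
  have bnn: "0 \<le> b k" for k unfolding b_def using cnn by (simp add: sum_nonneg)
  have eb: "exp_semigroup t (A_alpha a) k * w ^ k = exp (- t) * b k" for k
    unfolding exp_semigroup_finite[where F="A_alpha a", OF A_alpha_0] b_def c_def
    by (simp add: sum_distrib_right)
  have cs: "(\<lambda>n. c n k) sums b k" for k
    unfolding b_def
    by (rule sums_finite) (auto simp: c_def conv_pow_zero_below[where F="A_alpha a", OF A_alpha_0])
  have cs2: "(\<lambda>k. c n k) sums (t ^ n / fact n * G ^ n)" for n
  proof -
    have "(\<lambda>k. conv_pow (A_alpha a) n k * w ^ k) sums (G ^ n)"
      unfolding G_def by (rule gen_conv_pow[OF Anng w(1) gen_A[OF w]])
    from sums_mult[OF this, of "t ^ n / fact n"] show ?thesis by (simp add: c_def mult_ac)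
  qed
  have "(\<Sum>k. ennreal (b k)) = (\<Sum>k. \<Sum>n. ennreal (c n k))"
    using suminf_ennreal_eq[OF cnn cs] by simp
  also have "\<dots> = (\<Sum>n. \<Sum>k. ennreal (c n k))" by (rule ennreal_suminf_swap)
  also have "\<dots> = (\<Sum>n. ennreal (t ^ n / fact n * G ^ n))"
    using suminf_ennreal_eq[OF cnn cs2] by simp
  also have "\<dots> = ennreal (exp (t * G))"
    by (rule suminf_ennreal_eq) (use t G0 real_exp_series[of "t * G"] in \<open>auto simp: power_mult_distrib\<close>)
  finally have "b sums exp (t * G)" by (intro ennreal_sums bnn) auto
  from sums_mult[OF this, of "exp (- t)"] have "(\<lambda>k. exp (- t) * b k) sums exp (- t * (1 - w) powr a)"
    by (simp add: G_def exp_add[symmetric] algebra_simps)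
  then show ?thesis by (simp only: eb)
qed



lemma powser_unique:
  fixes a b :: "nat \<Rightarrow> real"
  assumes A: "\<And>w. 0 < w \<Longrightarrow> w < 1 \<Longrightarrow> (\<lambda>k. a k * w ^ k) sums f w"
    and B: "\<And>w. 0 < w \<Longrightarrow> w < 1 \<Longrightarrow> (\<lambda>k. b k * w ^ k) sums f w"
  shows "a k = b k"
proof -
  define d where "d k = a k - b k" for k
  have ds: "(\<lambda>k. d k * w ^ k) sums 0" if "0 < w" "w < 1" for w
    using sums_diff[OF A[OF that] B[OF that]] by (simp add: d_def left_diff_distrib)
  have "d m = 0" for m
  proof (induction m rule: less_induct)
    case (less m)
    have g: "(\<lambda>k. d (k + m) * w ^ k) sums 0" if w: "0 < w" "w < 1" for w
    proof -
      have "(\<lambda>i. d (i + m) * w ^ (i + m)) sums (0 - (\<Sum>i<m. d i * w ^ i))"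
        using sums_split_initial_segment[OF ds[OF w], of m] by simp
      also have "(\<Sum>i<m. d i * w ^ i) = 0" using less.IH by simp
      finally have "(\<lambda>i. d (i + m) * w ^ (i + m)) sums 0" by simp
      from sums_mult[OF this, of "inverse (w ^ m)"] show ?thesis
        using w by (simp add: power_add field_simps)
    qed
    define h where "h x = (\<Sum>k. d (k + m) * x ^ k)" for x :: real
    have "summable (\<lambda>k. d (k + m) * (1/2::real) ^ k)"
      using g[of "1/2"] by (simp add: sums_summable)
    then have "isCont h 0" unfolding h_def by (rule isCont_powser) simp
    then have "(h \<longlongrightarrow> h 0) (at_right 0)"
      unfolding isCont_def by (rule tendsto_mono[OF at_le, rotated]) simp
    moreover have "(h \<longlongrightarrow> 0) (at_right 0)"
    proof (rule tendsto_eventually)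
      show "\<forall>\<^sub>F x in at_right 0. h x = 0"
        using eventually_at_right_real[of 0 1]
        by (rule eventually_mono) (auto simp: h_def intro: sums_unique[symmetric] g)
    qed
    ultimately have "h 0 = 0" by (rule tendsto_unique[OF trivial_limit_at_right_real])
    then show ?case unfolding h_def using powser_zero[of "\<lambda>k. d (k + m)"] by simp
  qed
  then show ?thesis by (simp add: d_def)
qed



lemma gen_mu:
  assumes st: "is_stable_measure a t \<mu>" and w: "0 \<le> w" "w < 1"
  shows "(\<lambda>k. (LINT s|\<mu>. poisson s k) * w ^ k) sums exp (- t * (1 - w) powr a)"
proof -
  have se: "sets \<mu> = sets borel" and ps: "prob_space \<mu>" and n0: "emeasure \<mu> {..<0} = 0"
    and lap: "\<And>z::complex. Re z \<ge> 0 \<Longrightarrow>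
        (LINT s|\<mu>. exp (- (complex_of_real s * z))) = exp (- (complex_of_real t * z powr complex_of_real a))"
    using st unfolding is_stable_measure_def by auto
  interpret prob_space \<mu> by (rule ps)
  have meas: "g \<in> borel_measurable \<mu>" if "g \<in> borel_measurable borel" for g :: "real \<Rightarrow> real"
    by (subst measurable_cong_sets[OF se refl]) (rule that)
  have AE0: "AE s in \<mu>. 0 \<le> s"
  proof -
    have "{..<0::real} \<in> null_sets \<mu>" using n0 se by (auto intro: null_setsI)
    from AE_not_in[OF this] show ?thesis by (rule eventually_mono) auto
  qed
  define f where "f k s = poisson s k * w ^ k" for k s
  define E where "E s = exp (- (s * (1 - w)))" for s
  have fsum: "(\<lambda>k. f k s) sums E s" for s
  proof -
    from sums_mult[OF real_exp_series[of "s * w"], of "exp (- s)"]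
    have "(\<lambda>k. exp (- s) * ((s * w) ^ k / fact k)) sums (exp (- s) * exp (s * w))" .
    moreover have "exp (- s) * exp (s * w) = E s" by (simp add: E_def exp_add[symmetric] algebra_simps)
    ultimately show ?thesis by (simp add: f_def poisson_def power_mult_distrib mult_ac)
  qed
  have fnn: "0 \<le> f k s" if "0 \<le> s" for k s using that w by (simp add: f_def poisson_def)
  have Ele: "E s \<le> 1" if "0 \<le> s" for s using that w by (simp add: E_def mult_nonneg_nonneg)
  have fle: "f k s \<le> 1" if s: "0 \<le> s" for k s
  proof -
    have "sum (\<lambda>k. f k s) {k} \<le> suminf (\<lambda>k. f k s)"
      by (rule sum_le_suminf) (use fsum[of s] fnn[OF s] in \<open>auto simp: sums_summable\<close>)
    then show ?thesis using sums_unique[OF fsum[of s]] Ele[OF s] by simp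
  qed
  have fm[measurable]: "f k \<in> borel_measurable \<mu>" for k
    unfolding f_def poisson_def by (rule meas) (intro borel_measurable_continuous_onI continuous_intros, simp)
  have Em[measurable]: "E \<in> borel_measurable \<mu>"
    unfolding E_def by (rule meas) (intro borel_measurable_continuous_onI continuous_intros)
  have fi: "integrable \<mu> (f k)" for k
    by (rule Bochner_Integration.integrable_bound[OF integrable_const[of "1::real"] fm]) (use AE0 in \<open>auto elim!: eventually_mono simp: fnn fle\<close>)
  have Ei: "integrable \<mu> E"
    by (rule Bochner_Integration.integrable_bound[OF integrable_const[of "1::real"] Em]) (use AE0 w in \<open>auto elim!: eventually_mono simp: E_def Ele[unfolded E_def] intro!: mult_nonneg_nonneg\<close>)
  have LE: "(LINT s|\<mu>. E s) = exp (- t * (1 - w) powr a)"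
  proof -
    have "complex_of_real (LINT s|\<mu>. E s) = (LINT s|\<mu>. exp (- (complex_of_real s * complex_of_real (1 - w))))"
    proof -
      have "\<And>s. complex_of_real (E s) = exp (- (complex_of_real s * complex_of_real (1 - w)))"
        unfolding E_def by (metis exp_of_real of_real_minus of_real_mult)
      then show ?thesis by (simp only: integral_complex_of_real[symmetric])
    qed
    also have "\<dots> = exp (- (complex_of_real t * complex_of_real (1 - w) powr complex_of_real a))"
      by (rule lap) (use w in simp)
    also have "\<dots> = complex_of_real (exp (- t * (1 - w) powr a))"
      using w by (simp add: powr_of_real exp_of_real[symmetric] del: of_real_diff)
    finally show ?thesis by (simp only: of_real_eq_iff)
  qed
  have "(\<Sum>k. ennreal ((LINT s|\<mu>. poisson s k) * w ^ k)) = (\<Sum>k. \<integral>\<^sup>+ s. ennreal (f k s) \<partial>\<mu>)"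
  proof -
    have "ennreal ((LINT s|\<mu>. poisson s k) * w ^ k) = (\<integral>\<^sup>+ s. ennreal (f k s) \<partial>\<mu>)" for k
      by (subst nn_integral_eq_integral[OF fi]) (use AE0 in \<open>auto elim!: eventually_mono simp: f_def[abs_def] poisson_def w(1)\<close>)
    then show ?thesis by simp
  qed
  also have "\<dots> = (\<integral>\<^sup>+ s. (\<Sum>k. ennreal (f k s)) \<partial>\<mu>)"
    by (rule nn_integral_suminf[symmetric]) measurable
  also have "\<dots> = (\<integral>\<^sup>+ s. ennreal (E s) \<partial>\<mu>)"
    by (rule nn_integral_cong_AE) (use AE0 in \<open>auto elim!: eventually_mono intro: suminf_ennreal_eq fsum fnn\<close>)
  also have "\<dots> = ennreal (exp (- t * (1 - w) powr a))"
    by (subst nn_integral_eq_integral[OF Ei]) (auto simp: LE E_def)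
  finally have "(\<Sum>k. ennreal ((LINT s|\<mu>. poisson s k) * w ^ k)) = ennreal (exp (- t * (1 - w) powr a))" .
  moreover have "0 \<le> (LINT s|\<mu>. poisson s k) * w ^ k" for k
    using w AE0 by (intro mult_nonneg_nonneg integral_nonneg_AE) (auto elim!: eventually_mono simp: poisson_def)
  ultimately show ?thesis by (intro ennreal_sums) auto
qed

theorem proposition5p6:
  fixes \<alpha> t :: real and \<mu> :: "real measure" and k :: nat
  assumes "0 < \<alpha>" "\<alpha> < 1" "0 \<le> t"
    and "is_stable_measure \<alpha> t \<mu>"
  shows "exp_semigroup t (A_alpha \<alpha>) k = (LINT s|\<mu>. poisson s k)"
  by (rule powser_unique[where f="\<lambda>w. exp (- t * (1 - w) powr \<alpha>)"])
     (use gen_semigroup[OF assms(1-3)] gen_mu[OF assms(4)] in auto)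


end
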